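(* Let $g:\{0,1\}^N\to\{0,1\}$ be a total Boolean function. If $g$ can be computed by an $R$-round randomized AMPC algorithm with I/O capacity $S$ and error at most $1/3$, then the approximate degree of $g$ is at most $S^{2R}$.
   Context: AMPC model with I/O capacity $S$: computation proceeds in rounds communicating through distributed data stores (DDS) $\mathcal{D}_0,\dots,\mathcal{D}_R$, each storing under each key a multiset of values (possibly empty; duplicates allowed, each value written by a unique machine). On input $x\in\{0,1\}^N$, $\mathcal{D}_0$ consists of the pairs $(i,x_i)$, $i=1,\dots,N$. In round $r\ge1$ each machine (arbitrarily many, computationally unbounded, deterministic) adaptively queries keys of $\mathcal{D}_{r-1}$, receiving the whole multiset under the key, with later queries depending arbitrarily on earlier queries and responses; the total number of values in all responses plus the number of empty-response queries is at most $S$; it then writes at most $S$ key-value pairs to $\mathcal{D}_r$ as an arbitrary function of its queries and responses. In every round, on every input, at most $S$ values are written under any single key (a machine exceeding its budget stops querying and writes nothing). A deterministic algorithm computes $g$ in $R$ rounds if for every valid input $x$, $\mathcal{D}_R$ contains exactly the single pair $(\textsc{answer},g(x))$. A randomized AMPC algorithm is a probability distribution over deterministic AMPC algorithms; its number of rounds is the maximum over the support; it computes $g$ with error at most $\delta$ if for each valid input $x$ it outputs $g(x)$ (i.e. $\mathcal{D}_R$ is exactly $\{(\textsc{answer},g(x))\}$) with probability at least $1-\delta$. A polynomial $p$ approximately represents $g$ if $|p(x)-g(x)|\le 1/3$ for all $x\in\{0,1\}^N$; the approximate degree $\widetilde{\deg}(g)$ is the minimum degree of such a $p$. *)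

theory Defs
  imports "HOL-Probability.Probability"
begin

text \<open>Keys of a distributed data store: input keys, the distinguished ANSWER key,
  and arbitrary auxiliary keys (any countable key space can be encoded).\<close>

datatype key = Inp nat | Answer | Aux "nat list"

type_synonym dds = "key \<Rightarrow> nat multiset"

type_synonym hist = "(key \<times> nat multiset) list"

text \<open>A deterministic machine: an adaptive query strategy (Some k = query key k next,
  None = stop querying) and a write function applied to the final history.\<close>
type_synonym machine = "(hist \<Rightarrow> key option) \<times> (hist \<Rightarrow> (key \<times> nat) list)"

definition qcost :: "nat multiset \<Rightarrow> nat" where
  "qcost M = (if M = {#} then 1 else size M)"

text \<open>The fuel argument is only for termination; since every
  query costs at least 1, fuel S+1 never runs out when the budget is S.\<close>
fun exec :: "nat \<Rightarrow> machine \<Rightarrow> dds \<Rightarrow> nat \<Rightarrow> hist \<Rightarrow> hist option" where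
  "exec 0 m D b h = None"
| "exec (Suc n) m D b h =
     (case fst m h of
        None \<Rightarrow> Some h
      | Some k \<Rightarrow> (if qcost (D k) > b then None
                   else exec n m D (b - qcost (D k)) (h @ [(k, D k)])))"

definition writes :: "nat \<Rightarrow> machine \<Rightarrow> dds \<Rightarrow> (key \<times> nat) list" where
  "writes S m D = (case exec (Suc S) m D S [] of None \<Rightarrow> [] | Some h \<Rightarrow> snd m h)"

definition round_step :: "nat \<Rightarrow> machine list \<Rightarrow> dds \<Rightarrow> dds" where
  "round_step S ms D = (\<lambda>k. sum_list (map (\<lambda>m. mset (map snd (filter (\<lambda>p. fst p = k) (writes S m D)))) ms))"

type_synonym algorithm = "machine list list"

text \<open>Initial store D_0 for input x (x_i = xs ! (i-1), i = 1..N).\<close>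
definition dds0 :: "bool list \<Rightarrow> dds" where
  "dds0 xs = (\<lambda>k. case k of Inp i \<Rightarrow> (if 1 \<le> i \<and> i \<le> length xs then {# of_bool (xs ! (i - 1)) #} else {#})
                          | _ \<Rightarrow> {#})"

primrec dds_at :: "nat \<Rightarrow> algorithm \<Rightarrow> bool list \<Rightarrow> nat \<Rightarrow> dds" where
  "dds_at S A xs 0 = dds0 xs"
| "dds_at S A xs (Suc r) = round_step S (A ! r) (dds_at S A xs r)"

definition valid_alg :: "nat \<Rightarrow> nat \<Rightarrow> algorithm \<Rightarrow> bool" where
  "valid_alg N S A \<longleftrightarrow>
     (\<forall>xs. length xs = N \<longrightarrow> (\<forall>r < length A.
        (\<forall>m \<in> set (A ! r). length (writes S m (dds_at S A xs r)) \<le> S) \<and>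
        (\<forall>k. size (dds_at S A xs (Suc r) k) \<le> S)))"

definition outputs :: "nat \<Rightarrow> algorithm \<Rightarrow> bool list \<Rightarrow> bool \<Rightarrow> bool" where
  "outputs S A xs b \<longleftrightarrow>
     dds_at S A xs (length A) = (\<lambda>k. if k = Answer then {# of_bool b #} else {#})"

definition rand_computes :: "nat \<Rightarrow> nat \<Rightarrow> nat \<Rightarrow> real \<Rightarrow> algorithm pmf \<Rightarrow> (bool list \<Rightarrow> bool) \<Rightarrow> bool" where
  "rand_computes N S R \<delta> P g \<longleftrightarrow>
     (\<forall>A \<in> set_pmf P. valid_alg N S A \<and> length A \<le> R) \<and>
     (\<forall>xs. length xs = N \<longrightarrow> measure_pmf.prob P {A. outputs S A xs (g xs)} \<ge> 1 - \<delta>)"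

definition poly_deg_le :: "nat \<Rightarrow> nat \<Rightarrow> ((nat \<Rightarrow> real) \<Rightarrow> real) \<Rightarrow> bool" where
  "poly_deg_le N d p \<longleftrightarrow>
     (\<exists>(Mon :: (nat \<Rightarrow> nat) set) c. finite Mon \<and>
        (\<forall>\<alpha> \<in> Mon. (\<Sum>i = 1..N. \<alpha> i) \<le> d) \<and>
        (\<forall>x. p x = (\<Sum>\<alpha> \<in> Mon. c \<alpha> * (\<Prod>i = 1..N. x i ^ \<alpha> i))))"

definition bitvec :: "bool list \<Rightarrow> nat \<Rightarrow> real" where
  "bitvec xs = (\<lambda>i. of_bool (xs ! (i - 1)))"

definition approx_deg :: "nat \<Rightarrow> (bool list \<Rightarrow> bool) \<Rightarrow> nat" where
  "approx_deg N g = (LEAST d. \<exists>p. poly_deg_le N d p \<and>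
       (\<forall>xs. length xs = N \<longrightarrow> \<bar>p (bitvec xs) - of_bool (g xs)\<bar> \<le> 1/3))"

end

theory Submission
  imports Defs
begin


definition rep :: "nat \<Rightarrow> nat \<Rightarrow> (bool list \<Rightarrow> real) \<Rightarrow> bool" where
  "rep N d f \<longleftrightarrow> (\<exists>p. poly_deg_le N d p \<and> (\<forall>xs. length xs = N \<longrightarrow> p (bitvec xs) = f xs))"

lemma poly_gen:
  fixes I :: "'i set" and \<alpha> :: "'i \<Rightarrow> nat \<Rightarrow> nat"
  assumes "finite I" "\<forall>i\<in>I. (\<Sum>j = 1..N. \<alpha> i j) \<le> d"
    "\<forall>x. p x = (\<Sum>i\<in>I. c i * (\<Prod>j = 1..N. x j ^ \<alpha> i j))"
  shows "poly_deg_le N d p"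
  unfolding poly_deg_le_def
proof (intro exI conjI allI)
  show "finite (\<alpha> ` I)" using assms(1) by simp
  show "\<forall>\<beta>\<in>\<alpha> ` I. (\<Sum>j = 1..N. \<beta> j) \<le> d" using assms(2) by auto
  fix x
  have "p x = (\<Sum>\<gamma>\<in>\<alpha> ` I. \<Sum>i\<in>{i. i \<in> I \<and> \<alpha> i = \<gamma>}. c i * (\<Prod>j = 1..N. x j ^ \<alpha> i j))"
    unfolding assms(3)[rule_format] by (rule sum.image_gen[OF assms(1)])
  also have "\<dots> = (\<Sum>\<gamma>\<in>\<alpha> ` I. (\<Sum>i\<in>{i. i \<in> I \<and> \<alpha> i = \<gamma>}. c i) * (\<Prod>j = 1..N. x j ^ \<gamma> j))"
    by (intro sum.cong refl) (auto simp: sum_distrib_right)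
  finally show "p x = (\<Sum>\<gamma>\<in>\<alpha> ` I. (\<lambda>\<gamma>. \<Sum>i\<in>{i. i \<in> I \<and> \<alpha> i = \<gamma>}. c i) \<gamma> * (\<Prod>j = 1..N. x j ^ \<gamma> j))" by simp
qed

lemma rep_mono: "rep N d f \<Longrightarrow> d \<le> d' \<Longrightarrow> rep N d' f"
proof -
  assume a: "rep N d f" "d \<le> d'"
  then obtain p Mon c where "finite Mon" "\<forall>\<alpha>\<in>Mon. (\<Sum>i = 1..N. \<alpha> i) \<le> d"
    "\<forall>x. p x = (\<Sum>\<alpha> \<in> Mon. c \<alpha> * (\<Prod>i = 1..N. x i ^ \<alpha> i))"
    "\<forall>xs. length xs = N \<longrightarrow> p (bitvec xs) = f xs"
    unfolding rep_def poly_deg_le_def by blast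
  moreover have "\<forall>\<alpha>\<in>Mon. (\<Sum>i = 1..N. \<alpha> i) \<le> d'"
    using calculation(2) a(2) le_trans by blast
  ultimately show ?thesis unfolding rep_def poly_deg_le_def by blast
qed

lemma rep_cong: "rep N d f \<Longrightarrow> (\<And>xs. length xs = N \<Longrightarrow> f xs = g xs) \<Longrightarrow> rep N d g"
  unfolding rep_def by metis

lemma rep_const: "rep N 0 (\<lambda>_. c)"
  unfolding rep_def
proof (intro exI conjI allI impI)
  show "poly_deg_le N 0 (\<lambda>_. c)"
    by (rule poly_gen[where I="{()}" and \<alpha>="\<lambda>_ _. 0" and c="\<lambda>_. c"]) auto
qed simp

lemma rep_var:
  assumes "1 \<le> i" "i \<le> N"
  shows "rep N 1 (\<lambda>xs. of_bool (xs ! (i - 1)))"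
proof -
  have key: "(\<Prod>j = 1..N. x j ^ (if j = i then 1 else (0::nat))) = x i" for x :: "nat \<Rightarrow> real"
  proof -
    have "(\<Prod>j = 1..N. x j ^ (if j = i then 1 else (0::nat))) = (\<Prod>j = 1..N. if j = i then x j else 1)"
      by (rule prod.cong) auto
    also have "\<dots> = x i" using assms by (simp add: prod.delta)
    finally show ?thesis .
  qed
  have "poly_deg_le N 1 (\<lambda>x. x i)"
    by (rule poly_gen[where I="{()}" and \<alpha>="\<lambda>_ j. if j = i then 1 else (0::nat)" and c="\<lambda>_. 1"])
      (use assms key in \<open>simp_all add: sum.delta\<close>)
  then show ?thesis unfolding rep_def by (intro exI[of _ "\<lambda>x. x i"]) (simp add: bitvec_def)
qed

lemma rep_add: assumes "rep N d f" "rep N d g" shows "rep N d (\<lambda>xs. f xs + g xs)"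
proof -
  obtain p M1 c1 where p: "\<forall>\<alpha>\<in>M1. (\<Sum>i = 1..N. \<alpha> i) \<le> d" "finite M1"
    "\<forall>x. p x = (\<Sum>\<alpha>\<in>M1. c1 \<alpha> * (\<Prod>i = 1..N. x i ^ \<alpha> i))" "\<forall>xs. length xs = N \<longrightarrow> p (bitvec xs) = f xs"
    using assms(1) unfolding rep_def poly_deg_le_def by blast
  obtain q M2 c2 where q: "\<forall>\<alpha>\<in>M2. (\<Sum>i = 1..N. \<alpha> i) \<le> d" "finite M2"
    "\<forall>x. q x = (\<Sum>\<alpha>\<in>M2. c2 \<alpha> * (\<Prod>i = 1..N. x i ^ \<alpha> i))" "\<forall>xs. length xs = N \<longrightarrow> q (bitvec xs) = g xs"
    using assms(2) unfolding rep_def poly_deg_le_def by blast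
  have "poly_deg_le N d (\<lambda>x. p x + q x)"
  proof (rule poly_gen[where I="M1 <+> M2" and \<alpha>="case_sum id id" and c="case_sum c1 c2"])
    show "finite (M1 <+> M2)" using p q by simp
    show "\<forall>i\<in>M1 <+> M2. (\<Sum>j = 1..N. case_sum id id i j) \<le> d" using p q by auto
    show "\<forall>x. p x + q x = (\<Sum>i\<in>M1 <+> M2. case_sum c1 c2 i * (\<Prod>j = 1..N. x j ^ case_sum id id i j))"
      using p q by (simp add: sum.Plus)
  qed
  then show ?thesis unfolding rep_def using p q by auto
qed

lemma rep_mult: assumes "rep N d1 f" "rep N d2 g" shows "rep N (d1 + d2) (\<lambda>xs. f xs * g xs)"
proof -
  obtain p M1 c1 where p: "\<forall>\<alpha>\<in>M1. (\<Sum>i = 1..N. \<alpha> i) \<le> d1" "finite M1"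
    "\<forall>x. p x = (\<Sum>\<alpha>\<in>M1. c1 \<alpha> * (\<Prod>i = 1..N. x i ^ \<alpha> i))" "\<forall>xs. length xs = N \<longrightarrow> p (bitvec xs) = f xs"
    using assms(1) unfolding rep_def poly_deg_le_def by blast
  obtain q M2 c2 where q: "\<forall>\<alpha>\<in>M2. (\<Sum>i = 1..N. \<alpha> i) \<le> d2" "finite M2"
    "\<forall>x. q x = (\<Sum>\<alpha>\<in>M2. c2 \<alpha> * (\<Prod>i = 1..N. x i ^ \<alpha> i))" "\<forall>xs. length xs = N \<longrightarrow> q (bitvec xs) = g xs"
    using assms(2) unfolding rep_def poly_deg_le_def by blast
  have "poly_deg_le N (d1 + d2) (\<lambda>x. p x * q x)"
  proof (rule poly_gen[where I="M1 \<times> M2" and \<alpha>="\<lambda>(a,b) j. a j + b j" and c="\<lambda>(a,b). c1 a * c2 b"])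
    show "finite (M1 \<times> M2)" using p q by simp
    show "\<forall>i\<in>M1 \<times> M2. (\<Sum>j = 1..N. (\<lambda>(a,b) j. a j + b j) i j) \<le> d1 + d2"
      using p q by (auto simp: sum.distrib intro: add_mono)
    show "\<forall>x. p x * q x = (\<Sum>i\<in>M1 \<times> M2. (\<lambda>(a,b). c1 a * c2 b) i * (\<Prod>j = 1..N. x j ^ (\<lambda>(a,b) j. a j + b j) i j))"
    proof
      fix x
      have "p x * q x = (\<Sum>a\<in>M1. \<Sum>b\<in>M2. (c1 a * (\<Prod>i = 1..N. x i ^ a i)) * (c2 b * (\<Prod>i = 1..N. x i ^ b i)))"
        using p q by (simp add: sum_product)
      also have "\<dots> = (\<Sum>(a,b)\<in>M1 \<times> M2. (c1 a * c2 b) * (\<Prod>j = 1..N. x j ^ (a j + b j)))"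
        by (simp add: sum.cartesian_product power_add prod.distrib mult_ac)
      finally show "p x * q x = (\<Sum>i\<in>M1 \<times> M2. (\<lambda>(a,b). c1 a * c2 b) i * (\<Prod>j = 1..N. x j ^ (\<lambda>(a,b) j. a j + b j) i j))"
        by (simp add: case_prod_beta)
    qed
  qed
  then show ?thesis unfolding rep_def using p q by auto
qed



lemma rep_scale: "rep N d f \<Longrightarrow> rep N d (\<lambda>xs. c * f xs)"
  using rep_mult[OF rep_const, of N d f c] by simp

lemma rep_sum: "finite A \<Longrightarrow> (\<And>a. a \<in> A \<Longrightarrow> rep N d (f a)) \<Longrightarrow> rep N d (\<lambda>xs. \<Sum>a\<in>A. f a xs)"
proof (induction A rule: finite_induct)
  case empty
  then show ?case using rep_mono[OF rep_const] by simp
next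
  case (insert x F)
  then show ?case using rep_add[of N d "f x" "\<lambda>xs. \<Sum>a\<in>F. f a xs"] by simp
qed

lemma rep_prod: "finite A \<Longrightarrow> (\<And>a. a \<in> A \<Longrightarrow> rep N e (f a)) \<Longrightarrow> rep N (card A * e) (\<lambda>xs. \<Prod>a\<in>A. f a xs)"
proof (induction A rule: finite_induct)
  case empty
  then show ?case using rep_const by simp
next
  case (insert x F)
  then show ?case using rep_mult[of N e "f x" "card F * e" "\<lambda>xs. \<Prod>a\<in>F. f a xs"] by simp
qed

definition cube :: "nat \<Rightarrow> bool list set" where "cube N = {xs. length xs = N}"

lemma finite_cube: "finite (cube N)"
proof -
  have "cube N = {xs. set xs \<subseteq> UNIV \<and> length xs = N}" by (simp add: cube_def)
  then show ?thesis using finite_lists_length_eq[of "UNIV :: bool set" N] by simp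
qed

definition deg_ind :: "nat \<Rightarrow> nat \<Rightarrow> (bool list \<Rightarrow> 'a) \<Rightarrow> bool" where
  "deg_ind N d \<phi> \<longleftrightarrow> (\<forall>v. rep N d (\<lambda>xs. of_bool (\<phi> xs = v)))"

lemma deg_ind_mono: "deg_ind N d \<phi> \<Longrightarrow> d \<le> d' \<Longrightarrow> deg_ind N d' \<phi>"
  unfolding deg_ind_def using rep_mono by blast

lemma deg_ind_cong: "deg_ind N d \<phi> \<Longrightarrow> (\<And>xs. length xs = N \<Longrightarrow> \<phi> xs = \<psi> xs) \<Longrightarrow> deg_ind N d \<psi>"
  unfolding deg_ind_def by (metis (mono_tags, lifting) rep_cong)

lemma deg_ind_const: "deg_ind N d (\<lambda>_. c)"
  unfolding deg_ind_def using rep_mono[OF rep_const] by blast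

lemma sum_select:
  fixes g :: "'a \<Rightarrow> real"
  assumes "finite V" "a \<in> V"
  shows "(\<Sum>v\<in>V. of_bool (a = v) * g v) = g a"
proof -
  have "(\<Sum>v\<in>V. of_bool (a = v) * g v) = (\<Sum>v\<in>V. if a = v then g v else 0)"
    by (rule sum.cong) auto
  then show ?thesis using assms by simp
qed

lemma deg_ind_bind:
  assumes "deg_ind N d1 \<alpha>" "\<And>v. deg_ind N d2 (\<Phi> v)"
  shows "deg_ind N (d1 + d2) (\<lambda>xs. \<Phi> (\<alpha> xs) xs)"
  unfolding deg_ind_def
proof
  fix w
  have r: "rep N (d1 + d2) (\<lambda>xs. \<Sum>v\<in>\<alpha> ` cube N. of_bool (\<alpha> xs = v) * of_bool (\<Phi> v xs = w))"
    using assms finite_cube unfolding deg_ind_def by (intro rep_sum rep_mult) auto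
  show "rep N (d1 + d2) (\<lambda>xs. of_bool (\<Phi> (\<alpha> xs) xs = w))"
  proof (rule rep_cong[OF r])
    fix xs :: "bool list" assume "length xs = N"
    then have "\<alpha> xs \<in> \<alpha> ` cube N" by (simp add: cube_def)
    then show "(\<Sum>v\<in>\<alpha> ` cube N. of_bool (\<alpha> xs = v) * of_bool (\<Phi> v xs = w)) = (of_bool (\<Phi> (\<alpha> xs) xs = w) :: real)"
      using sum_select[of "\<alpha> ` cube N" "\<alpha> xs" "\<lambda>v. of_bool (\<Phi> v xs = w)"] finite_cube by simp
  qed
qed

lemma deg_ind_map: "deg_ind N d \<alpha> \<Longrightarrow> deg_ind N d (\<lambda>xs. \<psi> (\<alpha> xs))"
  using deg_ind_bind[of N d \<alpha> 0 "\<lambda>v _. \<psi> v"] deg_ind_const by fastforce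

lemma qcost_pos: "qcost M \<ge> 1"
  unfolding qcost_def by (auto simp: Suc_le_eq nonempty_has_size)

lemma exec_deg:
  assumes "\<And>k. deg_ind N d (\<lambda>xs. D xs k)"
  shows "deg_ind N (b * d) (\<lambda>xs. exec n m (D xs) b h)"
  using assms
proof (induction n arbitrary: b h)
  case 0
  then show ?case using deg_ind_const by simp
next
  case (Suc n)
  show ?case
  proof (cases "fst m h")
    case None
    then show ?thesis using deg_ind_const by simp
  next
    case (Some k)
    show ?thesis
    proof (cases b)
      case 0
      have "exec (Suc n) m (D xs) b h = None" for xs
        using Some 0 qcost_pos[of "D xs k"] by simp
      then show ?thesis using deg_ind_const[of N "b*d" None] by simp
    next
      case (Suc b')
      define \<Phi> where "\<Phi> v xs = (if qcost v > b then None else exec n m (D xs) (b - qcost v) (h @ [(k, v)]))" for v xs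
      have "deg_ind N (b' * d) (\<Phi> v)" for v
      proof (cases "qcost v > b")
        case True
        then show ?thesis unfolding \<Phi>_def using deg_ind_const by simp
      next
        case False
        have "deg_ind N ((b - qcost v) * d) (\<lambda>xs. exec n m (D xs) (b - qcost v) (h @ [(k, v)]))"
          using Suc.IH Suc.prems by blast
        moreover have "(b - qcost v) * d \<le> b' * d" using qcost_pos[of v] Suc by (intro mult_le_mono1) simp
        ultimately have "deg_ind N (b' * d) (\<lambda>xs. exec n m (D xs) (b - qcost v) (h @ [(k, v)]))"
          by (rule deg_ind_mono)
        then show ?thesis unfolding \<Phi>_def using False by simp
      qed
      then have "deg_ind N (d + b' * d) (\<lambda>xs. \<Phi> (D xs k) xs)"
        using deg_ind_bind[OF Suc.prems[of k]] by blast
      moreover have "\<Phi> (D xs k) xs = exec (Suc n) m (D xs) b h" for xs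
        using Some unfolding \<Phi>_def by simp
      ultimately show ?thesis using Suc by simp
    qed
  qed
qed

lemma writes_deg:
  assumes "\<And>k. deg_ind N d (\<lambda>xs. D xs k)"
  shows "deg_ind N (S * d) (\<lambda>xs. writes S m (D xs))"
  unfolding writes_def
  by (rule deg_ind_map[of N "S * d" "\<lambda>xs. exec (Suc S) m (D xs) S []"]) (rule exec_deg[OF assms])



lemma prod_of_bool_real: "finite A \<Longrightarrow> (\<Prod>i\<in>A. (of_bool (P i) :: real)) = of_bool (\<forall>i\<in>A. P i)"
  by (induction A rule: finite_induct) auto

lemma size_sum_mset_fin: "finite J \<Longrightarrow> size (\<Sum>j\<in>J. f j :: 'a multiset) = (\<Sum>j\<in>J. size (f j))"
  by (induction J rule: finite_induct) auto

lemma cap: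
  fixes W :: "'j \<Rightarrow> bool list \<Rightarrow> 'a multiset"
  assumes finJ: "finite J" and degW: "\<And>j. j \<in> J \<Longrightarrow> deg_ind N e (W j)"
    and capK: "\<And>xs. length xs = N \<Longrightarrow> size (\<Sum>j\<in>J. W j xs) \<le> K"
  shows "deg_ind N (K * e) (\<lambda>xs. \<Sum>j\<in>J. W j xs)"
proof -
  define Vals where "Vals = (\<Union>j\<in>J. W j ` cube N) - {{#}}"
  have finV: "finite Vals" unfolding Vals_def using finJ finite_cube by auto
  define I where "I = J \<times> Vals"
  have finI: "finite I" unfolding I_def using finJ finV by simp
  define y where "y i xs = (of_bool (W (fst i) xs = snd i) :: real)" for i xs
  have repy: "rep N e (y i)" if "i \<in> I" for i
    using degW[of "fst i"] that unfolding y_def I_def deg_ind_def by auto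
  define Y where "Y xs = {i\<in>I. W (fst i) xs = snd i}" for xs
  have YI: "Y xs \<in> Pow I" for xs unfolding Y_def by auto
  have fact1: "(\<Sum>j\<in>J. W j xs) = (\<Sum>i\<in>Y xs. snd i)" if "length xs = N" for xs
  proof -
    have "(\<Sum>i\<in>Y xs. snd i) = (\<Sum>i\<in>I. if W (fst i) xs = snd i then snd i else {#})"
      unfolding Y_def using finI by (simp add: sum.inter_filter)
    also have "\<dots> = (\<Sum>j\<in>J. \<Sum>V\<in>Vals. if W j xs = V then V else {#})"
      unfolding I_def by (simp add: sum.cartesian_product case_prod_beta)
    also have "\<dots> = (\<Sum>j\<in>J. if W j xs \<in> Vals then W j xs else {#})"
      using finV by (simp add: sum.delta)
    also have "\<dots> = (\<Sum>j\<in>J. W j xs)"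
    proof (rule sum.cong[OF refl])
      fix j assume "j \<in> J"
      then have "W j xs \<noteq> {#} \<Longrightarrow> W j xs \<in> Vals" using that unfolding Vals_def cube_def by auto
      then show "(if W j xs \<in> Vals then W j xs else {#}) = W j xs" by auto
    qed
    finally show ?thesis by simp
  qed
  have fact2: "card (Y xs) \<le> K" if "length xs = N" for xs
  proof -
    let ?J' = "{j\<in>J. W j xs \<noteq> {#}}"
    have "Y xs \<subseteq> (\<lambda>j. (j, W j xs)) ` ?J'"
      unfolding Y_def I_def Vals_def by force
    then have "card (Y xs) \<le> card ((\<lambda>j. (j, W j xs)) ` ?J')"
      using finJ by (intro card_mono) auto
    also have "\<dots> \<le> card ?J'" by (rule card_image_le) (use finJ in simp)
    also have "\<dots> = (\<Sum>j\<in>?J'. 1)" by simp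
    also have "\<dots> \<le> (\<Sum>j\<in>?J'. size (W j xs))"
      by (rule sum_mono) (auto simp: Suc_le_eq nonempty_has_size)
    also have "\<dots> \<le> (\<Sum>j\<in>J. size (W j xs))"
      using finJ by (intro sum_mono2) auto
    also have "\<dots> = size (\<Sum>j\<in>J. W j xs)" using size_sum_mset_fin[OF finJ] by simp
    also have "\<dots> \<le> K" using capK[OF that] .
    finally show ?thesis .
  qed
  define f where "f T xs = (\<Sum>U\<in>Pow (I - T). (-1) ^ card U *
      (if card (T \<union> U) \<le> K then (\<Prod>i\<in>T \<union> U. y i xs) else 0))" for T xs
  have repf: "rep N (K * e) (f T)" if "T \<in> Pow I" for T
    unfolding f_def
  proof (rule rep_sum)
    show "finite (Pow (I - T))" using finI by simp
    fix U assume U: "U \<in> Pow (I - T)"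
    show "rep N (K * e) (\<lambda>xs. (-1) ^ card U * (if card (T \<union> U) \<le> K then (\<Prod>i\<in>T \<union> U. y i xs) else 0))"
    proof (rule rep_scale, cases "card (T \<union> U) \<le> K")
      case True
      have "rep N (card (T \<union> U) * e) (\<lambda>xs. \<Prod>i\<in>T \<union> U. y i xs)"
        using that U finI repy by (intro rep_prod) (auto intro: finite_subset)
      then have "rep N (K * e) (\<lambda>xs. \<Prod>i\<in>T \<union> U. y i xs)"
        by (rule rep_mono) (use True in simp)
      then show "rep N (K * e) (\<lambda>xs. if card (T \<union> U) \<le> K then (\<Prod>i\<in>T \<union> U. y i xs) else 0)"
        using True by simp
    next
      case False
      then show "rep N (K * e) (\<lambda>xs. if card (T \<union> U) \<le> K then (\<Prod>i\<in>T \<union> U. y i xs) else 0)"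
        using rep_mono[OF rep_const] by simp
    qed
  qed
  have valf: "f T xs = of_bool (Y xs = T)" if T: "T \<in> Pow I" and xs: "length xs = N" for T xs
  proof -
    have finT: "finite T" using T finI by (auto intro: finite_subset)
    have "of_bool (Y xs = T) = (of_bool ((\<forall>i\<in>T. W (fst i) xs = snd i) \<and> (\<forall>i\<in>I - T. \<not> W (fst i) xs = snd i)) :: real)"
      using T unfolding Y_def by (intro arg_cong[where f=of_bool]) auto
    also have "\<dots> = (\<Prod>i\<in>T. y i xs) * (\<Prod>i\<in>I - T. 1 - y i xs)"
      unfolding y_def using finT finI
      by (simp add: prod_of_bool_real[symmetric] of_bool_not_iff[symmetric])
    also have "(\<Prod>i\<in>I - T. 1 - y i xs) = (\<Prod>i\<in>I - T. - y i xs + 1)" by simp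
    also have "\<dots> = (\<Sum>U\<in>Pow (I - T). (\<Prod>i\<in>U. - y i xs) * (\<Prod>i\<in>(I - T) - U. 1))"
      by (rule prod_add) (use finI in simp)
    also have "(\<Prod>i\<in>T. y i xs) * \<dots> = (\<Sum>U\<in>Pow (I - T). (-1) ^ card U * (\<Prod>i\<in>T \<union> U. y i xs))"
    proof (simp add: sum_distrib_left, rule sum.cong[OF refl])
      fix U assume U: "U \<in> Pow (I - T)"
      then have "finite U" using finI by (auto intro: finite_subset)
      moreover have "T \<inter> U = {}" using U by auto
      ultimately have "(\<Prod>i\<in>T \<union> U. y i xs) = (\<Prod>i\<in>T. y i xs) * (\<Prod>i\<in>U. y i xs)"
        using finT by (simp add: prod.union_disjoint)
      then show "(\<Prod>i\<in>T. y i xs) * (\<Prod>i\<in>U. - y i xs) = (-1) ^ card U * (\<Prod>i\<in>T \<union> U. y i xs)"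
        by (simp add: prod_uminus)
    qed
    also have "\<dots> = f T xs" unfolding f_def
    proof (rule sum.cong[OF refl])
      fix U assume U: "U \<in> Pow (I - T)"
      have "(\<Prod>i\<in>T \<union> U. y i xs) = 0" if big: "\<not> card (T \<union> U) \<le> K"
      proof (rule ccontr)
        assume "(\<Prod>i\<in>T \<union> U. y i xs) \<noteq> 0"
        moreover have "finite (T \<union> U)" using U finT finI by (auto intro: finite_subset)
        ultimately have "\<forall>i\<in>T \<union> U. y i xs \<noteq> 0" using prod_zero_iff by blast
        then have "T \<union> U \<subseteq> Y xs" using T U unfolding y_def Y_def by auto
        then have "card (T \<union> U) \<le> card (Y xs)"
          using finI by (intro card_mono) (auto simp: Y_def)
        with fact2[OF xs] big show False by simp
      qed
      then show "(-1) ^ card U * (\<Prod>i\<in>T \<union> U. y i xs) =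
        (-1) ^ card U * (if card (T \<union> U) \<le> K then (\<Prod>i\<in>T \<union> U. y i xs) else 0)" by auto
    qed
    finally show ?thesis by simp
  qed
  show ?thesis unfolding deg_ind_def
  proof
    fix M
    have r: "rep N (K * e) (\<lambda>xs. \<Sum>T\<in>Pow I. of_bool ((\<Sum>i\<in>T. snd i) = M) * f T xs)"
      using finI repf by (intro rep_sum rep_scale) auto
    show "rep N (K * e) (\<lambda>xs. of_bool ((\<Sum>j\<in>J. W j xs) = M))"
    proof (rule rep_cong[OF r])
      fix xs :: "bool list" assume xs: "length xs = N"
      have "(\<Sum>T\<in>Pow I. of_bool ((\<Sum>i\<in>T. snd i) = M) * f T xs) =
            (\<Sum>T\<in>Pow I. of_bool (Y xs = T) * (of_bool ((\<Sum>i\<in>T. snd i) = M) :: real))"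
        using valf[OF _ xs] by (intro sum.cong) auto
      also have "\<dots> = of_bool ((\<Sum>i\<in>Y xs. snd i) = M)"
        by (rule sum_select) (use finI YI in auto)
      finally show "(\<Sum>T\<in>Pow I. of_bool ((\<Sum>i\<in>T. snd i) = M) * f T xs) = of_bool ((\<Sum>j\<in>J. W j xs) = M)"
        using fact1[OF xs] by simp
    qed
  qed
qed



lemma round_deg:
  assumes degD: "\<And>k. deg_ind N d (\<lambda>xs. D xs k)"
    and capS: "\<And>xs k. length xs = N \<Longrightarrow> size (round_step S ms (D xs) k) \<le> S"
  shows "deg_ind N (S * (S * d)) (\<lambda>xs. round_step S ms (D xs) k)"
proof -
  define W where "W j xs = mset (map snd (filter (\<lambda>p. fst p = k) (writes S (ms ! j) (D xs))))" for j xs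
  have eq: "round_step S ms (D xs) k = (\<Sum>j\<in>{0..<length ms}. W j xs)" for xs
    unfolding round_step_def W_def by (simp add: sum_list_sum_nth)
  have "deg_ind N (S * (S * d)) (\<lambda>xs. \<Sum>j\<in>{0..<length ms}. W j xs)"
  proof (rule cap)
    fix j
    show "deg_ind N (S * d) (W j)" unfolding W_def
      by (rule deg_ind_map[of N "S * d" "\<lambda>xs. writes S (ms ! j) (D xs)"]) (rule writes_deg[OF degD])
  next
    fix xs :: "bool list" assume "length xs = N"
    then show "size (\<Sum>j\<in>{0..<length ms}. W j xs) \<le> S" using capS eq by metis
  qed simp
  then show ?thesis using eq by simp
qed

lemma bit_deg:
  assumes "1 \<le> i" "i \<le> N"
  shows "deg_ind N 1 (\<lambda>xs. xs ! (i - 1))"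
  unfolding deg_ind_def
proof
  fix v :: bool
  show "rep N 1 (\<lambda>xs. of_bool (xs ! (i - 1) = v))"
  proof (cases v)
    case True
    then show ?thesis using rep_var[OF assms] by simp
  next
    case False
    have "rep N 1 (\<lambda>xs. 1 + (-1) * of_bool (xs ! (i - 1)))"
      by (rule rep_add[OF rep_mono[OF rep_const] rep_scale[OF rep_var[OF assms]]]) simp
    then show ?thesis by (rule rep_cong) (use False in auto)
  qed
qed

lemma dds0_deg: "deg_ind N 1 (\<lambda>xs. dds0 xs k)"
proof (cases k)
  case (Inp i)
  show ?thesis
  proof (cases "1 \<le> i \<and> i \<le> N")
    case True
    have "deg_ind N 1 (\<lambda>xs. {# of_bool (xs ! (i - 1)) #} :: nat multiset)"
      by (rule deg_ind_map[OF bit_deg]) (use True in auto)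
    then show ?thesis by (rule deg_ind_cong) (use True Inp in \<open>simp add: dds0_def\<close>)
  next
    case False
    have "deg_ind N 1 (\<lambda>xs. {#} :: nat multiset)" by (rule deg_ind_const)
    then show ?thesis by (rule deg_ind_cong) (use False Inp in \<open>auto simp add: dds0_def\<close>)
  qed
next
  case Answer
  then show ?thesis using deg_ind_const[of N 1 "{#}"] by (simp add: dds0_def)
next
  case (Aux x)
  then show ?thesis using deg_ind_const[of N 1 "{#}"] by (simp add: dds0_def)
qed

lemma dds_deg:
  assumes "valid_alg N S A"
  shows "r \<le> length A \<Longrightarrow> deg_ind N (S ^ (2 * r)) (\<lambda>xs. dds_at S A xs r k)"
proof (induction r arbitrary: k)
  case 0
  then show ?case using dds0_deg by simp
next
  case (Suc r)
  have "deg_ind N (S * (S * S ^ (2 * r))) (\<lambda>xs. round_step S (A ! r) (dds_at S A xs r) k)"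
  proof (rule round_deg)
    show "deg_ind N (S ^ (2 * r)) (\<lambda>xs. dds_at S A xs r k')" for k' using Suc by simp
    fix xs :: "bool list" and k' assume "length xs = N"
    then show "size (round_step S (A ! r) (dds_at S A xs r) k') \<le> S"
      using assms Suc.prems unfolding valid_alg_def by (metis Suc_le_lessD dds_at.simps(2))
  qed
  then show ?case by (simp add: power_add mult_ac)
qed

lemma answer_deg:
  assumes "valid_alg N S A" "length A \<le> R"
  shows "deg_ind N (S ^ (2 * R)) (\<lambda>xs. dds_at S A xs (length A) Answer)"
proof (cases "length A = 0")
  case True
  then show ?thesis using deg_ind_const[of N "S ^ (2 * R)" "{#}"] by (simp add: dds0_def)
next
  case False
  have "S ^ (2 * length A) \<le> S ^ (2 * R)"
  proof (cases "S = 0")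
    case True then show ?thesis using False assms(2) by (simp add: power_0_left)
  next
    case False then show ?thesis using assms(2) by (intro power_increasing) auto
  qed
  then show ?thesis using dds_deg[OF assms(1) order_refl] deg_ind_mono by blast
qed

theorem theorem3p4:
  fixes N S R :: nat and g :: "bool list \<Rightarrow> bool" and P :: "algorithm pmf"
  assumes "rand_computes N S R (1/3) P g"
  shows "approx_deg N g \<le> S ^ (2 * R)"
proof -
  let ?D = "S ^ (2 * R)"
  define E where "E A xs \<longleftrightarrow> dds_at S A xs (length A) Answer = {#1#}" for A xs
  define q where "q xs = measure_pmf.prob P {A. E A xs}" for xs
  define F where "F A = {xs \<in> cube N. E A xs}" for A
  have valid: "\<And>A. A \<in> set_pmf P \<Longrightarrow> valid_alg N S A \<and> length A \<le> R"
    using assms unfolding rand_computes_def by blast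
  have q_eq: "q xs = (\<Sum>T\<in>Pow (cube N). measure_pmf.prob P {A. F A = T} * of_bool (xs \<in> T))"
    if xs: "length xs = N" for xs
  proof -
    have "{A. E A xs} = (\<Union>T\<in>{T\<in>Pow (cube N). xs \<in> T}. {A. F A = T})"
      using xs unfolding F_def cube_def by auto
    then have "q xs = (\<Sum>T\<in>{T\<in>Pow (cube N). xs \<in> T}. measure_pmf.prob P {A. F A = T})"
      unfolding q_def
    proof (simp only:)
      have fin: "finite {T\<in>Pow (cube N). xs \<in> T}" using finite_cube by simp
      show "measure_pmf.prob P (\<Union>T\<in>{T\<in>Pow (cube N). xs \<in> T}. {A. F A = T}) =
        (\<Sum>T\<in>{T\<in>Pow (cube N). xs \<in> T}. measure_pmf.prob P {A. F A = T})"
        by (rule measure_pmf.finite_measure_finite_Union[OF fin]) (auto simp: disjoint_family_on_def)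
    qed
    also have "\<dots> = (\<Sum>T\<in>Pow (cube N). if xs \<in> T then measure_pmf.prob P {A. F A = T} else 0)"
      by (rule sum.inter_filter) (simp add: finite_cube)
    also have "\<dots> = (\<Sum>T\<in>Pow (cube N). measure_pmf.prob P {A. F A = T} * of_bool (xs \<in> T))"
      by (rule sum.cong) auto
    finally show ?thesis .
  qed
  have repq: "rep N ?D q"
  proof -
    have "rep N ?D (\<lambda>xs. \<Sum>T\<in>Pow (cube N). measure_pmf.prob P {A. F A = T} * of_bool (xs \<in> T))"
    proof (rule rep_sum)
      show "finite (Pow (cube N))" using finite_cube by simp
      fix T assume T: "T \<in> Pow (cube N)"
      show "rep N ?D (\<lambda>xs. measure_pmf.prob P {A. F A = T} * of_bool (xs \<in> T))"
      proof (cases "measure_pmf.prob P {A. F A = T} = 0")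
        case True
        then show ?thesis using rep_mono[OF rep_const[of N 0], of ?D] by simp
      next
        case False
        then obtain A where A: "A \<in> set_pmf P" "F A = T" using measure_pmf_zero_iff by blast
        have "rep N ?D (\<lambda>xs. of_bool (dds_at S A xs (length A) Answer = {#1#}))"
          using answer_deg[of N S A R] valid[OF A(1)] unfolding deg_ind_def by blast
        then have "rep N ?D (\<lambda>xs. of_bool (xs \<in> T))"
          by (rule rep_cong) (use A(2) in \<open>auto simp: F_def E_def cube_def\<close>)
        then show ?thesis by (rule rep_scale)
      qed
    qed
    then show ?thesis by (rule rep_cong) (simp add: q_eq)
  qed
  then obtain p where p: "poly_deg_le N ?D p" "\<And>xs. length xs = N \<Longrightarrow> p (bitvec xs) = q xs"
    unfolding rep_def by blast
  have approx: "\<bar>p (bitvec xs) - of_bool (g xs)\<bar> \<le> 1/3" if xs: "length xs = N" for xs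
  proof -
    have good: "measure_pmf.prob P {A. outputs S A xs (g xs)} \<ge> 2/3"
      using assms xs unfolding rand_computes_def by simp
    have q01: "0 \<le> q xs" "q xs \<le> 1" unfolding q_def by simp_all
    show ?thesis
    proof (cases "g xs")
      case True
      have "{A. outputs S A xs (g xs)} \<subseteq> {A. E A xs}"
        using True unfolding outputs_def E_def by auto
      then have "measure_pmf.prob P {A. outputs S A xs (g xs)} \<le> q xs"
        unfolding q_def by (intro measure_pmf.finite_measure_mono) auto
      then show ?thesis using good q01 p(2)[OF xs] True by simp
    next
      case False
      have "{A. E A xs} \<subseteq> UNIV - {A. outputs S A xs (g xs)}"
        using False unfolding outputs_def E_def by auto
      then have "q xs \<le> measure_pmf.prob P (UNIV - {A. outputs S A xs (g xs)})"
        unfolding q_def by (intro measure_pmf.finite_measure_mono) auto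
      also have "\<dots> = 1 - measure_pmf.prob P {A. outputs S A xs (g xs)}"
        using measure_pmf.prob_compl[of "{A. outputs S A xs (g xs)}" P] by simp
      finally show ?thesis using good q01 p(2)[OF xs] False by simp
    qed
  qed
  show ?thesis unfolding approx_deg_def
    by (rule Least_le) (use p(1) approx in blast)
qed

end
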